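(* Let $d\ge2$, $\Psi(\mathbf x)=-\sum_{i=1}^d\ln\bar x_i$ and $f(\mathbf w)=-\log\langle\mathbf r,\bar{\mathbf w}\rangle$ for some $\mathbf r\in[0,1]^d\setminus\{\mathbf 0\}$. Then for all $\mu\in(0,1)$ and all $\tilde{\mathbf w}\in\mathcal C_{d-1}$ with $\bar{\tilde w}_i>0$ for all $i\in\{1,\dots,d\}$, setting $\mathbf w=(1-\mu)\tilde{\mathbf w}+\mu\mathbf 1/d$, we have $$\nabla f(\mathbf w)\nabla f(\mathbf w)^\top\preceq(1-\mu)^{-2}\nabla^2\Psi(\tilde{\mathbf w}),$$ and furthermore $\|\nabla f(\mathbf w)\|^2_{\nabla^{-2}\Psi(\tilde{\mathbf w})}\le(1-\mu)^{-2}$.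
   Context: $\mathcal C_{d-1}=\{\mathbf u\in\mathbb R^{d-1}:u_i\ge0,\ \sum_iu_i\le1\}$. For $\mathbf v\in\mathbb R^{d-1}$, $\bar{\mathbf v}=(v_1,\dots,v_{d-1},1-\sum_{i=1}^{d-1}v_i)\in\mathbb R^d$. $\mathbf 1$ is the all-ones vector in $\mathbb R^{d-1}$, $\preceq$ is the Loewner order, $\|\mathbf x\|_A=\sqrt{\mathbf x^\top A\mathbf x}$, and $\nabla^{-2}\Psi(\tilde{\mathbf w})=(\nabla^2\Psi(\tilde{\mathbf w}))^{-1}$. *)

theory Defs
  imports "HOL-Analysis.Analysis"
begin

text \<open>Vectors in R^(d-1) are modelled as real^'n with d - 1 = CARD('n) (so d >= 2 automatically);
  vectors in R^d are indexed by 'n option, where None is the last coordinate.\<close>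

definition bar :: "real^'n \<Rightarrow> real^('n option)" where
  "bar v = (\<chi> i. case i of Some j \<Rightarrow> v $ j | None \<Rightarrow> 1 - (\<Sum>k\<in>UNIV. v $ k))"

definition simplex_C :: "(real^'n) set" where
  "simplex_C = {u. (\<forall>i. u $ i \<ge> 0) \<and> (\<Sum>i\<in>UNIV. u $ i) \<le> 1}"

definition Psi :: "real^'n \<Rightarrow> real" where
  "Psi x = - (\<Sum>i\<in>UNIV. ln (bar x $ i))"

definition floss :: "real^('n option) \<Rightarrow> real^'n \<Rightarrow> real" where
  "floss r w = - ln (r \<bullet> bar w)"

definition grad :: "(real^'n \<Rightarrow> real) \<Rightarrow> real^'n \<Rightarrow> real^'n" where
  "grad F x = (THE g. (F has_derivative (\<lambda>h. g \<bullet> h)) (at x))"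

definition hess :: "(real^'n \<Rightarrow> real) \<Rightarrow> real^'n \<Rightarrow> real^'n^'n" where
  "hess F x = (THE H. (grad F has_derivative (\<lambda>h. H *v h)) (at x))"

definition loewner_le :: "real^'n^'n \<Rightarrow> real^'n^'n \<Rightarrow> bool" where
  "loewner_le A B \<longleftrightarrow> (\<forall>x. x \<bullet> (A *v x) \<le> x \<bullet> (B *v x))"

definition outer :: "real^'n \<Rightarrow> real^'n^'n" where
  "outer g = (\<chi> i j. g $ i * g $ j)"

end

theory Submission
  imports Defs
begin

lemma vec_has_derivative:
  fixes f :: "'a::real_normed_vector \<Rightarrow> real^'n" 
  assumes "\<And>j. ((\<lambda>x. f x $ j) has_derivative (\<lambda>h. f' h $ j)) (at a within S)"
  shows "(f has_derivative f') (at a within S)"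
proof (rule has_derivative_componentwise_within[THEN iffD2], rule ballI)
  fix i :: "real^'n" assume "i \<in> Basis"
  then obtain j where ij: "i = axis j 1" using axis_inverse by blast
  have e: "\<And>y::real^'n. y \<bullet> i = y $ j" unfolding ij by (simp add: inner_axis)
  show "((\<lambda>x. f x \<bullet> i) has_derivative (\<lambda>x. f' x \<bullet> i)) (at a within S)"
    unfolding e by (rule assms)
qed

lemma grad_eq:
  assumes "(F has_derivative (\<lambda>h. g \<bullet> h)) (at x)"
  shows "grad F x = g"
  unfolding grad_def
proof (rule the_equality)
  fix g' assume "(F has_derivative (\<lambda>h. g' \<bullet> h)) (at x)"
  from has_derivative_unique[OF assms this] have "\<And>h. g \<bullet> h = g' \<bullet> h" by metis
  from this[of "g - g'"] have "(g - g') \<bullet> (g - g') = 0" by (simp add: inner_diff_left)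
  then show "g' = g" by simp
qed (rule assms)

lemma hess_eq:
  assumes "(grad F has_derivative (\<lambda>h. H *v h)) (at x)"
  shows "hess F x = H"
  unfolding hess_def
proof (rule the_equality)
  fix H' assume "(grad F has_derivative (\<lambda>h. H' *v h)) (at x)"
  from has_derivative_unique[OF assms this] have "\<And>h. H *v h = H' *v h" by metis
  then show "H' = H" by (simp add: matrix_eq)
qed (rule assms)

lemma sum_option: "(\<Sum>i\<in>UNIV. f i) = f None + (\<Sum>j\<in>(UNIV::'n::finite set). f (Some j))"
  by (simp add: UNIV_option_conv sum.reindex)

lemma bar_None: "bar v $ None = 1 - (\<Sum>k\<in>UNIV. v $ k)"
  by (simp add: bar_def)
lemma bar_Some: "bar v $ Some j = v $ j"
  by (simp add: bar_def)

lemma matrix_inv_right: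
  fixes A :: "real^'n^'n"
  assumes "invertible A" shows "A ** matrix_inv A = mat 1"
  using someI_ex[of "\<lambda>A'. A ** A' = mat 1 \<and> A' ** A = mat 1"] assms
  unfolding invertible_def matrix_inv_def by blast

lemma outer_quad: "x \<bullet> (outer g *v x) = (g \<bullet> x)^2"
proof -
  have "outer g *v x = (g \<bullet> x) *\<^sub>R g"
    by (simp add: vec_eq_iff outer_def matrix_vector_mult_def inner_vec_def sum_distrib_left mult_ac)
  then show ?thesis by (simp add: power2_eq_square inner_commute)
qed

lemma has_derivative_vec_nth'[derivative_intros]: "((\<lambda>x. x $ i) has_derivative (\<lambda>x. x $ i)) F"
  by (rule bounded_linear_imp_has_derivative[OF bounded_linear_vec_nth])

definition gP :: "real^'n \<Rightarrow> real^'n" where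
  "gP x = (\<chi> j. 1 / bar x $ None - 1 / x $ j)"

lemma Psi_alt: "Psi x = - (ln (1 - (\<Sum>k\<in>UNIV. x $ k)) + (\<Sum>j\<in>UNIV. ln (x $ j)))"
  unfolding Psi_def by (subst sum_option) (simp add: bar_None bar_Some)

lemma Psi_deriv:
  fixes x :: "real^'n"
  assumes "\<forall>i. bar x $ i > 0"
  shows "(Psi has_derivative (\<lambda>h. gP x \<bullet> h)) (at x)"
proof -
  have pN: "0 < 1 - (\<Sum>k\<in>UNIV. x $ k)" using assms bar_None by metis
  have pS: "\<And>j. 0 < x $ j" using assms bar_Some by metis
  have "((\<lambda>x. - (ln (1 - (\<Sum>k\<in>UNIV. x $ k)) + (\<Sum>j\<in>UNIV. ln (x $ j)))) has_derivative
     (\<lambda>h. - ((0 - (\<Sum>k\<in>UNIV. h $ k)) * inverse (1 - (\<Sum>k\<in>UNIV. x $ k)) + (\<Sum>j\<in>UNIV. h $ j * inverse (x $ j))))) (at x)"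
    by (intro derivative_intros pN pS)
  moreover have "(\<lambda>h. - ((0 - (\<Sum>k\<in>UNIV. h $ k)) * inverse (1 - (\<Sum>k\<in>UNIV. x $ k)) + (\<Sum>j\<in>UNIV. h $ j * inverse (x $ j))))
     = (\<lambda>h. gP x \<bullet> h)"
  proof (rule ext)
    fix h :: "real^'n"
    have "gP x \<bullet> h = (\<Sum>i\<in>UNIV. h $ i / (1 - (\<Sum>k\<in>UNIV. x $ k)) - h $ i / x $ i)"
      by (simp add: gP_def inner_vec_def bar_None algebra_simps)
    also have "\<dots> = (\<Sum>i\<in>UNIV. h $ i) / (1 - (\<Sum>k\<in>UNIV. x $ k)) - (\<Sum>i\<in>UNIV. h $ i / x $ i)"
      by (simp add: sum_subtractf sum_divide_distrib)
    finally show "- ((0 - (\<Sum>k\<in>UNIV. h $ k)) * inverse (1 - (\<Sum>k\<in>UNIV. x $ k)) + (\<Sum>j\<in>UNIV. h $ j * inverse (x $ j))) = gP x \<bullet> h"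
      by (simp add: divide_inverse)
  qed
  ultimately show ?thesis unfolding Psi_alt[abs_def] by simp
qed

definition HP :: "real^'n \<Rightarrow> real^'n^'n" where
  "HP x = (\<chi> j k. (if j = k then 1 / (x $ j)^2 else 0) + 1 / (bar x $ None)^2)"

lemma HP_mult: "(HP x *v h) $ j = h $ j / (x $ j)^2 + (\<Sum>k\<in>UNIV. h $ k) / (bar x $ None)^2"
proof -
  have "(HP x *v h) $ j = (\<Sum>k\<in>UNIV. (if k = j then h $ j / (x $ j)^2 else 0) + h $ k / (bar x $ None)^2)"
    unfolding matrix_vector_mult_def by (simp, rule sum.cong) (auto simp: HP_def field_simps)
  also have "\<dots> = h $ j / (x $ j)^2 + (\<Sum>k\<in>UNIV. h $ k) / (bar x $ None)^2"
    by (simp add: sum.distrib sum_divide_distrib)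
  finally show ?thesis .
qed

lemma HP_quad: "h \<bullet> (HP x *v h) = (\<Sum>j\<in>UNIV. (h $ j)^2 / (x $ j)^2) + (\<Sum>k\<in>UNIV. h $ k)^2 / (bar x $ None)^2"
proof -
  define A where "A = (\<Sum>k\<in>UNIV. h $ k) / (bar x $ None)^2"
  have "h \<bullet> (HP x *v h) = (\<Sum>j\<in>UNIV. (h $ j)^2 / (x $ j)^2 + h $ j * A)"
    by (simp add: inner_vec_def HP_mult distrib_left power2_eq_square A_def)
  also have "\<dots> = (\<Sum>j\<in>UNIV. (h $ j)^2 / (x $ j)^2) + (\<Sum>k\<in>UNIV. h $ k) * A"
    by (simp add: sum.distrib sum_distrib_right)
  also have "(\<Sum>k\<in>UNIV. h $ k) * A = (\<Sum>k\<in>UNIV. h $ k)^2 / (bar x $ None)^2"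
    by (simp add: A_def power2_eq_square)
  finally show ?thesis .
qed

lemma gP_deriv:
  fixes x :: "real^'n"
  assumes "\<forall>i. bar x $ i > 0"
  shows "(gP has_derivative (\<lambda>h. HP x *v h)) (at x)"
proof -
  have pN: "0 < 1 - (\<Sum>k\<in>UNIV. x $ k)" using assms bar_None by metis
  have pS: "\<And>j. 0 < x $ j" using assms bar_Some by metis
  define N where "N = 1 - (\<Sum>k\<in>UNIV. x $ k)"
  have bN: "bar x $ None = N" by (simp add: N_def bar_None)
  have e: "gP = (\<lambda>x. \<chi> j. inverse (1 - (\<Sum>k\<in>UNIV. x $ k)) - inverse (x $ j))"
    by (rule ext) (simp add: gP_def bar_None divide_inverse)
  show ?thesis unfolding e
  proof (rule vec_has_derivative)
    fix j
    have "((\<lambda>x. inverse (1 - (\<Sum>k\<in>UNIV. x $ k)) - inverse (x $ j)) has_derivative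
      (\<lambda>h. - (inverse (1 - (\<Sum>k\<in>UNIV. x $ k)) * (0 - (\<Sum>k\<in>UNIV. h $ k)) * inverse (1 - (\<Sum>k\<in>UNIV. x $ k)))
          - - (inverse (x $ j) * h $ j * inverse (x $ j)))) (at x)"
      using pN pS[of j] by (intro derivative_intros) auto
    moreover have "(\<lambda>h. - (inverse (1 - (\<Sum>k\<in>UNIV. x $ k)) * (0 - (\<Sum>k\<in>UNIV. h $ k)) * inverse (1 - (\<Sum>k\<in>UNIV. x $ k)))
          - - (inverse (x $ j) * h $ j * inverse (x $ j))) = (\<lambda>h. (HP x *v h) $ j)"
      unfolding N_def[symmetric] by (rule ext) (simp add: HP_mult bN divide_inverse power2_eq_square algebra_simps)
    ultimately show "((\<lambda>x. (\<chi> j. inverse (1 - (\<Sum>k\<in>UNIV. x $ k)) - inverse (x $ j)) $ j) has_derivative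
      (\<lambda>h. (HP x *v h) $ j)) (at x)" by simp
  qed
qed

lemma open_pos: "open {x::real^'n. \<forall>i. 0 < bar x $ i}"
proof -
  have "{x::real^'n. \<forall>i. 0 < bar x $ i} = (\<Inter>i\<in>UNIV. {x. 0 < bar x $ i})" by auto
  moreover have "open {x::real^'n. 0 < bar x $ i}" for i
  proof (cases i)
    case None
    then show ?thesis by (simp add: bar_None, intro open_Collect_less continuous_intros)
  next
    case (Some j)
    then show ?thesis by (simp add: bar_Some, intro open_Collect_less continuous_intros)
  qed
  ultimately show ?thesis by (simp add: open_INT)
qed

lemma hess_Psi:
  fixes x :: "real^'n"
  assumes "\<forall>i. bar x $ i > 0"
  shows "hess Psi x = HP x"
proof (rule hess_eq)
  show "(grad Psi has_derivative (*v) (HP x)) (at x)"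
    by (rule has_derivative_transform_within_open[OF gP_deriv[OF assms] open_pos])
      (use assms in \<open>auto intro: grad_eq[OF Psi_deriv, symmetric]\<close>)
qed

definition gF :: "real^('n option) \<Rightarrow> real^'n \<Rightarrow> real^'n" where
  "gF r x = (\<chi> j. (r $ None - r $ Some j) / (r \<bullet> bar x))"

lemma inner_bar: "r \<bullet> bar x = r $ None * (1 - (\<Sum>k\<in>UNIV. x $ k)) + (\<Sum>j\<in>UNIV. r $ Some j * x $ j)"
  by (simp add: inner_vec_def sum_option[where f="\<lambda>i. r $ i * bar x $ i"] bar_None bar_Some)

lemma floss_deriv:
  fixes r :: "real^('n::finite option)" and x :: "real^'n"
  assumes "0 < r \<bullet> bar x"
  shows "(floss r has_derivative (\<lambda>h. gF r x \<bullet> h)) (at x)"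
proof -
  have e: "floss r = (\<lambda>x. - ln (r $ None * (1 - (\<Sum>k\<in>UNIV. x $ k)) + (\<Sum>j\<in>UNIV. r $ Some j * x $ j)))"
    by (rule ext) (simp add: floss_def inner_bar)
  have p: "0 < r $ None * (1 - (\<Sum>k\<in>UNIV. x $ k)) + (\<Sum>j\<in>UNIV. r $ Some j * x $ j)"
    using assms inner_bar by metis
  have "((\<lambda>x. - ln (r $ None * (1 - (\<Sum>k\<in>UNIV. x $ k)) + (\<Sum>j\<in>UNIV. r $ Some j * x $ j))) has_derivative
     (\<lambda>h. - ((r $ None * (0 - (\<Sum>k\<in>UNIV. h $ k)) + (\<Sum>j\<in>UNIV. r $ Some j * h $ j)) * inverse (r \<bullet> bar x)))) (at x)"
    using p unfolding inner_bar by (intro derivative_intros) auto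
  moreover have "(\<lambda>h. - ((r $ None * (0 - (\<Sum>k\<in>UNIV. h $ k)) + (\<Sum>j\<in>UNIV. r $ Some j * h $ j)) * inverse (r \<bullet> bar x)))
     = (\<lambda>h. gF r x \<bullet> h)"
  proof (rule ext)
    fix h :: "real^'n"
    have "gF r x \<bullet> h = (\<Sum>j\<in>UNIV. r $ None * h $ j - r $ Some j * h $ j) / (r \<bullet> bar x)"
      by (simp add: gF_def inner_vec_def sum_divide_distrib algebra_simps)
    also have "\<dots> = (r $ None * (\<Sum>j\<in>UNIV. h $ j) - (\<Sum>j\<in>UNIV. r $ Some j * h $ j)) / (r \<bullet> bar x)"
      by (simp add: sum_subtractf sum_distrib_left)
    finally show "- ((r $ None * (0 - (\<Sum>k\<in>UNIV. h $ k)) + (\<Sum>j\<in>UNIV. r $ Some j * h $ j)) * inverse (r \<bullet> bar x)) = gF r x \<bullet> h"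
      by (simp add: divide_inverse algebra_simps)
  qed
  ultimately show ?thesis unfolding e by simp
qed

lemma HP_pos:
  fixes x :: "real^'n"
  assumes "\<forall>i. bar x $ i > 0" and "h \<noteq> 0"
  shows "0 < h \<bullet> (HP x *v h)"
proof -
  obtain j where j: "h $ j \<noteq> 0" using assms(2) by (auto simp: vec_eq_iff)
  have pS: "\<And>j. 0 < x $ j" using assms(1) bar_Some by metis
  have "0 < (\<Sum>j\<in>UNIV. (h $ j)^2 / (x $ j)^2)"
    by (rule sum_pos2[of UNIV j]) (use j pS[of j] in \<open>auto intro!: divide_pos_pos\<close>)
  then show ?thesis unfolding HP_quad by (simp add: add_pos_nonneg)
qed

lemma HP_nonneg:
  fixes x :: "real^'n"
  assumes "\<forall>i. bar x $ i > 0"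
  shows "0 \<le> h \<bullet> (HP x *v h)"
  using HP_pos[OF assms, of h] by (cases "h = 0") auto

lemma HP_invertible:
  fixes x :: "real^'n"
  assumes "\<forall>i. bar x $ i > 0"
  shows "invertible (HP x)"
proof -
  have "inj ((*v) (HP x))"
  proof (rule injI)
    fix a b assume "HP x *v a = HP x *v b"
    then have "HP x *v (a - b) = 0" by (simp add: matrix_vector_mult_diff_distrib)
    then have "(a - b) \<bullet> (HP x *v (a - b)) = 0" by simp
    then show "a = b" using HP_pos[OF assms, of "a - b"] by (cases "a - b = 0") auto
  qed
  then show ?thesis
    by (simp add: invertible_left_inverse matrix_left_invertible_injective)
qed

lemma key_ineq:
  fixes r :: "real^('n::finite option)" and b :: "real^('n option)" and x :: "real^'n"
  assumes r0: "\<forall>i. 0 \<le> r $ i" and bpos: "\<forall>i. 0 < b $ i"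
  shows "(r $ None * (\<Sum>k\<in>UNIV. x $ k) - (\<Sum>j\<in>UNIV. r $ Some j * x $ j))^2
     \<le> (r \<bullet> b)^2 * ((\<Sum>j\<in>UNIV. (x $ j)^2 / (b $ Some j)^2) + (\<Sum>k\<in>UNIV. x $ k)^2 / (b $ None)^2)"
proof -
  define y :: "real^('n option)" where "y = (\<chi> i. case i of None \<Rightarrow> - (\<Sum>k\<in>UNIV. x $ k) | Some j \<Rightarrow> x $ j)"
  define u :: "real^('n option)" where "u = (\<chi> i. r $ i * b $ i)"
  define v :: "real^('n option)" where "v = (\<chi> i. y $ i / b $ i)"
  have bnz: "\<And>i. b $ i \<noteq> 0" using bpos by (metis less_irrefl)
  have uv: "u \<bullet> v = - (r $ None * (\<Sum>k\<in>UNIV. x $ k) - (\<Sum>j\<in>UNIV. r $ Some j * x $ j))"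
    unfolding inner_vec_def u_def v_def y_def
    by (subst sum_option) (simp add: bnz)
  have vv: "v \<bullet> v = (\<Sum>j\<in>UNIV. (x $ j)^2 / (b $ Some j)^2) + (\<Sum>k\<in>UNIV. x $ k)^2 / (b $ None)^2"
    unfolding inner_vec_def v_def y_def
    by (subst sum_option) (simp add: power2_eq_square)
  have rb: "r \<bullet> b = (\<Sum>i\<in>UNIV. u $ i)" by (simp add: inner_vec_def u_def)
  have u0: "\<And>i. 0 \<le> u $ i" using r0 bpos by (simp add: u_def less_imp_le)
  have uu: "u \<bullet> u \<le> (r \<bullet> b)^2"
  proof -
    have "u \<bullet> u = (\<Sum>i\<in>UNIV. u $ i * u $ i)" by (simp add: inner_vec_def)
    also have "\<dots> \<le> (\<Sum>i\<in>UNIV. u $ i * (\<Sum>i\<in>UNIV. u $ i))"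
      by (rule sum_mono) (rule mult_left_mono, rule member_le_sum, auto simp: u0)
    also have "\<dots> = (r \<bullet> b)^2" by (simp add: rb sum_distrib_right[symmetric] power2_eq_square)
    finally show ?thesis .
  qed
  have "(u \<bullet> v)^2 \<le> (u \<bullet> u) * (v \<bullet> v)" by (rule Cauchy_Schwarz_ineq)
  also have "\<dots> \<le> (r \<bullet> b)^2 * (v \<bullet> v)" by (rule mult_right_mono[OF uu]) simp
  finally have "(u \<bullet> v)^2 \<le> (r \<bullet> b)^2 * (v \<bullet> v)" .
  moreover have "(u \<bullet> v)^2 = (r $ None * (\<Sum>k\<in>UNIV. x $ k) - (\<Sum>j\<in>UNIV. r $ Some j * x $ j))^2"
    unfolding uv by (rule power2_minus)
  ultimately show ?thesis using vv by simp
qed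

theorem lemma13:
  fixes r :: "real^('n::finite option)" and \<mu> :: real and wt :: "real^'n"
  assumes "\<forall>i. 0 \<le> r $ i \<and> r $ i \<le> 1" and "r \<noteq> 0"
    and "0 < \<mu>" and "\<mu> < 1"
    and "wt \<in> simplex_C" and "\<forall>i. bar wt $ i > 0"
  shows "let w = (1 - \<mu>) *\<^sub>R wt + (\<mu> / real (CARD('n) + 1)) *\<^sub>R (\<chi> i. 1) in
           loewner_le (outer (grad (floss r) w)) ((1 - \<mu>) powr (-2) *\<^sub>R hess Psi wt)
         \<and> grad (floss r) w \<bullet> (matrix_inv (hess Psi wt) *v grad (floss r) w) \<le> (1 - \<mu>) powr (-2)"
proof -
  define d :: real where "d = real (CARD('n) + 1)"
  define w where "w = (1 - \<mu>) *\<^sub>R wt + (\<mu> / d) *\<^sub>R ((\<chi> i. 1) :: real^'n)"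
  define b where "b = bar wt"
  define H where "H = HP wt"
  define c :: real where "c = 1 / (1 - \<mu>)^2"
  have r0: "\<forall>i. 0 \<le> r $ i" using assms(1) by auto
  have bpos: "\<forall>i. 0 < b $ i" using assms(6) by (simp add: b_def)
  have dpos: "0 < d" by (simp add: d_def)
  have barw: "bar w $ i = (1 - \<mu>) * b $ i + \<mu> / d" for i
  proof (cases i)
    case None
    have "(\<Sum>k\<in>UNIV. w $ k) = (1 - \<mu>) * (\<Sum>k\<in>UNIV. wt $ k) + real (CARD('n)) * (\<mu> / d)"
      by (simp add: w_def sum.distrib sum_distrib_left)
    moreover have "real (CARD('n)) = d - 1" by (simp add: d_def)
    ultimately show ?thesis using None dpos
      by (simp add: b_def bar_None field_simps)
  next
    case (Some j)
    then show ?thesis by (simp add: b_def bar_Some w_def)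
  qed
  define R where "R = r \<bullet> b"
  define s where "s = r \<bullet> bar w"
  obtain i0 where i0: "r $ i0 \<noteq> 0" using assms(2) by (auto simp: vec_eq_iff)
  have Rpos: "0 < R"
    unfolding R_def inner_vec_def inner_real_def
  proof (rule sum_pos2[of UNIV i0])
    have "0 < r $ i0" using i0 r0 by (metis order.not_eq_order_implies_strict)
    then show "0 < r $ i0 * b $ i0" using bpos by simp
  next
    show "\<And>i. i \<in> UNIV \<Longrightarrow> 0 \<le> r $ i * b $ i" using r0 bpos by (simp add: less_imp_le)
  qed simp_all
  have sR: "(1 - \<mu>) * R \<le> s"
  proof -
    have "s = (1 - \<mu>) * R + (\<mu> / d) * (\<Sum>i\<in>UNIV. r $ i)"
      by (simp add: s_def R_def inner_vec_def barw distrib_left sum.distrib sum_distrib_left mult_ac)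
    moreover have "0 \<le> (\<mu> / d) * (\<Sum>i\<in>UNIV. r $ i)"
      using assms(3) dpos r0 by (intro mult_nonneg_nonneg sum_nonneg) auto
    ultimately show ?thesis by simp
  qed
  have mpos: "0 < 1 - \<mu>" using assms(4) by simp
  have "0 < (1 - \<mu>) * R" using mpos Rpos by (rule mult_pos_pos)
  then have spos: "0 < s" using sR by linarith
  have gr: "grad (floss r) w = gF r w"
    by (rule grad_eq[OF floss_deriv]) (use spos s_def in simp)
  have hs: "hess Psi wt = H" unfolding H_def by (rule hess_Psi[OF assms(6)])
  have cpow: "(1 - \<mu>) powr (-2) = c"
    using mpos by (simp add: c_def powr_minus divide_inverse)
  define g where "g = gF r w"
  have main: "(g \<bullet> x)^2 \<le> c * (x \<bullet> (H *v x))" for x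
  proof -
    define S where "S = (\<Sum>k\<in>UNIV. x $ k)"
    define Q where "Q = (\<Sum>j\<in>UNIV. (x $ j)^2 / (b $ Some j)^2) + S^2 / (b $ None)^2"
    have Q0: "0 \<le> Q" unfolding Q_def by (intro add_nonneg_nonneg sum_nonneg) auto
    have HQ: "x \<bullet> (H *v x) = Q"
      unfolding H_def HP_quad Q_def S_def b_def by (simp add: bar_Some)
    have gx: "g \<bullet> x = (r $ None * S - (\<Sum>j\<in>UNIV. r $ Some j * x $ j)) / s"
    proof -
      have "g \<bullet> x = (\<Sum>j\<in>UNIV. r $ None * x $ j - r $ Some j * x $ j) / s"
        by (simp add: g_def gF_def s_def inner_vec_def sum_divide_distrib algebra_simps)
      also have "\<dots> = (r $ None * S - (\<Sum>j\<in>UNIV. r $ Some j * x $ j)) / s"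
        by (simp add: S_def sum_subtractf sum_distrib_left)
      finally show ?thesis .
    qed
    have K: "(r $ None * S - (\<Sum>j\<in>UNIV. r $ Some j * x $ j))^2 \<le> R^2 * Q"
      unfolding R_def Q_def S_def by (rule key_ineq[OF r0 bpos])
    have "(g \<bullet> x)^2 = (r $ None * S - (\<Sum>j\<in>UNIV. r $ Some j * x $ j))^2 / s^2"
      by (simp add: gx power_divide)
    also have "\<dots> \<le> R^2 * Q / s^2"
      by (rule divide_right_mono[OF K]) simp
    also have "\<dots> \<le> R^2 * Q / ((1 - \<mu>) * R)^2"
    proof (rule divide_left_mono)
      have "0 < (1 - \<mu>) * R" using mpos Rpos by (rule mult_pos_pos)
      then show "((1 - \<mu>) * R)^2 \<le> s^2" using sR by (intro power_mono) simp_all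
      show "0 \<le> R^2 * Q" using Q0 by simp
      have a1: "0 < s^2" using spos by (rule zero_less_power)
      have a2: "0 < ((1 - \<mu>) * R)^2" using \<open>0 < (1 - \<mu>) * R\<close> by (rule zero_less_power)
      show "0 < s^2 * ((1 - \<mu>) * R)^2" using a1 a2 by (rule mult_pos_pos)
    qed
    also have "\<dots> = R^2 * Q / ((1 - \<mu>)^2 * R^2)" by (simp add: power_mult_distrib)
    also have "\<dots> = c * Q" using Rpos mpos by (simp add: c_def)
    finally show ?thesis using HQ by simp
  qed
  have part1: "loewner_le (outer g) (c *\<^sub>R H)"
    unfolding loewner_le_def
  proof
    fix x :: "real^'n"
    have "x \<bullet> ((c *\<^sub>R H) *v x) = c * (x \<bullet> (H *v x))"
      by (simp add: scaleR_matrix_vector_assoc[symmetric])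
    then show "x \<bullet> (outer g *v x) \<le> x \<bullet> ((c *\<^sub>R H) *v x)"
      using main[of x] by (simp add: outer_quad)
  qed
  have part2: "g \<bullet> (matrix_inv H *v g) \<le> c"
  proof -
    define z where "z = matrix_inv H *v g"
    have Hz: "H *v z = g"
      unfolding z_def H_def
      by (simp add: matrix_vector_mul_assoc matrix_inv_right[OF HP_invertible[OF assms(6)]])
    define t where "t = g \<bullet> z"
    have t_eq: "t = z \<bullet> (H *v z)" by (simp add: t_def Hz inner_commute)
    have t0: "0 \<le> t" unfolding t_eq H_def by (rule HP_nonneg[OF assms(6)])
    have "t^2 \<le> c * t" using main[of z] by (simp add: t_def t_eq[symmetric])
    then have "t * t \<le> c * t" by (simp add: power2_eq_square)
    moreover have "0 \<le> c" by (simp add: c_def)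
    ultimately have "t \<le> c" using t0 by (cases "t = 0") (auto simp: mult_le_cancel_right)
    then show ?thesis by (simp add: t_def z_def)
  qed
  show ?thesis
    unfolding Let_def d_def[symmetric] w_def[symmetric] gr hs cpow g_def[symmetric]
    using part1 part2 by simp
qed

end
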